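(* Assume in addition that $l$ is $\mu$-strongly convex on $\mathcal{X}$ for some $\mu>0$. Let $(y^{k},x^{k})_{k\ge0}$ be generated by SPDHG (as in the context) with step-sizes $\beta^{k+1}=\frac{2}{\mu(k+2)+2L}$. For any saddle point $(y^*,x^* )$ of $\min_{x\in\mathcal{X}}\max_{y\in\mathcal{Y}}P(y,x)$ and every $k\ge0$, $$0 \geq \mathbb{E}\left[ P(y^{k+1},x^* ) - P(y^*,x^{k+1}) \right] \geq \frac{\mu(k+2)+2L}{4}\mathbb{E}\| x^*-x^{k+1}\|^2 + \frac{1}{2s}\mathbb{E}\| y^*-y^{k+1}\|^2 -\frac{\mu k+2L}{4}\mathbb{E}\| x^*-x^k\|^2 - \frac{1}{2s}\mathbb{E}\| y^*-y^k\|^2 - \frac{2\lambda_{\max}(F^\top F)D_y^2+2\sigma^2}{\mu(k+1)}.$$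
   Context: Setting: $\mathcal{X}\subset\mathbb{R}^d$ is a nonempty convex compact set, $\mathcal{Y}\subset\mathbb{R}^l$ is a nonempty convex compact set with diameter $D_y$ (so $\|y-y'\|\le D_y$ for all $y,y'\in\mathcal{Y}$), $F\in\mathbb{R}^{l\times d}$, and $\lambda_{\max}(F^\top F)$ denotes the largest eigenvalue of $F^\top F$. The loss is $l(x)=\mathbb{E}_\xi[l(x,\xi)]$, a convex, continuously differentiable function on $\mathcal{X}$ with $L$-Lipschitz gradient: $\|\nabla l(x_1)-\nabla l(x_2)\|\le L\|x_1-x_2\|$ for all $x_1,x_2\in\mathcal{X}$. $\mu$-strong convexity means $l(y)-l(x)-(y-x)^\top\nabla l(x)\ge\frac{\mu}{2}\|y-x\|^2$ for all $x,y\in\mathcal{X}$. The stochastic gradient $\nabla l(x,\xi)$ satisfies, for every $x\in\mathcal{X}$: $\mathbb{E}[\nabla l(x,\xi)]=\nabla l(x)$ and $\mathbb{E}\|\nabla l(x,\xi)-\nabla l(x)\|^2\le\sigma^2$ for a constant $\sigma>0$. The saddle function is $P(y,x)=l(x)+\langle y,Fx\rangle$ for $x\in\mathcal{X},y\in\mathcal{Y}$; a saddle point $(y^*,x^* )$ satisfies $P(y,x^* )\le P(y^*,x^* )\le P(y^*,x)$ for all $(y,x)\in\mathcal{Y}\times\mathcal{X}$. SPDHG: fix $s>0$, $x^0\in\mathcal{X}$, $y^0\in\mathcal{Y}$, and step-sizes $\beta^{k+1}>0$. For $k=0,1,2,\dots$, draw a sample $\xi^{k+1}$ independently of the past (i.i.d.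 samples), and set $$y^{k+1}=\arg\max_{y\in\mathcal{Y}}\Big\{P(y,x^k)-\tfrac{1}{2s}\|y-y^k\|^2\Big\},\qquad x^{k+1}=\Pi_{\mathcal{X}}\Big[x^k-\beta^{k+1}\big(\nabla l(x^k,\xi^{k+1})+F^\top y^{k+1}\big)\Big],$$ where $\Pi_{\mathcal{X}}$ is Euclidean projection onto $\mathcal{X}$. *)

theory Defs
  imports "HOL-Probability.Probability"
begin

definition Psad :: "(real^'d \<Rightarrow> real) \<Rightarrow> real^'d^'l \<Rightarrow> real^'l \<Rightarrow> real^'d \<Rightarrow> real" where
  "Psad l F y x = l x + y \<bullet> (F *v x)"

definition lambda_max :: "real^'n^'n \<Rightarrow> real" where
  "lambda_max A = Max {c. \<exists>v. v \<noteq> 0 \<and> A *v v = c *\<^sub>R v}"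

text \<open>SPDHG iterates (y^k, x^k) driven by the sample sequence: sample number k
  (the paper's xi^{k+1}) is xs k.\<close>
fun spdhg :: "(real^'d) set \<Rightarrow> (real^'l) set \<Rightarrow> real^'d^'l \<Rightarrow> (real^'d \<Rightarrow> real)
   \<Rightarrow> (real^'d \<Rightarrow> 'e \<Rightarrow> real^'d) \<Rightarrow> real \<Rightarrow> (nat \<Rightarrow> real)
   \<Rightarrow> real^'d \<Rightarrow> real^'l \<Rightarrow> (nat \<Rightarrow> 'e) \<Rightarrow> nat \<Rightarrow> (real^'l) \<times> (real^'d)" where
  "spdhg X Y F l g s beta x0 y0 xs 0 = (y0, x0)"
| "spdhg X Y F l g s beta x0 y0 xs (Suc k) =
     (let yk = fst (spdhg X Y F l g s beta x0 y0 xs k);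
          xk = snd (spdhg X Y F l g s beta x0 y0 xs k);
          y' = arg_max (\<lambda>v. Psad l F v xk - (1 / (2 * s)) * (norm (v - yk))\<^sup>2) (\<lambda>v. v \<in> Y);
          x' = closest_point X (xk - beta (Suc k) *\<^sub>R (g xk (xs k) + transpose F *v y'))
      in (y', x'))"

end

theory Submission
  imports Defs
begin



lemma dot_adj: fixes A :: "real^'n^'m"
  shows "(A *v x) \<bullet> y = x \<bullet> (transpose A *v y)"
proof -
  have "(A *v x) \<bullet> y = (\<Sum>i\<in>UNIV. \<Sum>j\<in>UNIV. A$i$j * x$j * y$i)"
    unfolding inner_vec_def matrix_vector_mult_def by (simp add: sum_distrib_right)
  also have "\<dots> = (\<Sum>j\<in>UNIV. \<Sum>i\<in>UNIV. A$i$j * x$j * y$i)" by (rule sum.swap)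
  also have "\<dots> = x \<bullet> (transpose A *v y)"
    unfolding inner_vec_def matrix_vector_mult_def transpose_def by (simp add: sum_distrib_left mult_ac)
  finally show ?thesis .
qed

lemma norm_add_sq: fixes a b :: "'a::real_inner"
  shows "(norm (a + t *\<^sub>R b))^2 = (norm a)^2 + 2*t*(a \<bullet> b) + t^2*(norm b)^2"
  unfolding power2_norm_eq_inner
  by (simp add: inner_add_left inner_add_right algebra_simps power2_eq_square inner_commute)

lemma quad_zero:
  fixes b q :: real
  assumes "\<And>t. 2 * t * b + t^2 * q \<ge> 0" "q \<ge> 0"
  shows "b = 0"
proof -
  define t where "t = -b/(q+1)"
  have tq: "t * (q+1) = -b" using assms(2) unfolding t_def by (simp add: field_simps)
  have "2 * t * b + t^2 * q \<ge> 0" using assms(1) .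
  moreover have "(q+1)^2 > 0" using assms(2) by simp
  ultimately have "(2 * t * b + t^2 * q) * (q+1)^2 \<ge> 0" by simp
  moreover have "(2 * t * b + t^2 * q) * (q+1)^2 = 2 * (t*(q+1)) * b * (q+1) + (t*(q+1))^2 * q"
    by (simp add: algebra_simps power2_eq_square)
  ultimately have "2 * (-b) * b * (q+1) + (-b)^2 * q \<ge> 0" by (simp only: tq)
  then have "b^2 * (q + 2) \<le> 0" by (simp add: algebra_simps power2_eq_square)
  moreover have "q + 2 > 0" using assms(2) by simp
  ultimately have "b^2 \<le> 0" by (simp add: mult_le_0_iff)
  then show ?thesis by simp
qed

lemma eig_finite:
  fixes A :: "real^'n^'n"
  assumes sym: "transpose A = A"
  shows "finite {c. \<exists>v. v \<noteq> 0 \<and> A *v v = c *\<^sub>R v}"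
proof -
  define S where "S = {c. \<exists>v. v \<noteq> 0 \<and> A *v v = c *\<^sub>R v}"
  define f where "f c = (SOME v. v \<noteq> 0 \<and> A *v v = c *\<^sub>R v)" for c
  have fP: "f c \<noteq> 0 \<and> A *v f c = c *\<^sub>R f c" if "c \<in> S" for c
  proof -
    from that obtain v where "v \<noteq> 0 \<and> A *v v = c *\<^sub>R v" unfolding S_def by blast
    then show ?thesis unfolding f_def by (rule someI)
  qed
  have inj: "inj_on f S"
  proof (rule inj_onI)
    fix c d assume c: "c \<in> S" and d: "d \<in> S" and e: "f c = f d"
    have "c *\<^sub>R f c = A *v f c" using fP[OF c] by simp
    also have "\<dots> = A *v f d" using e by (rule arg_cong)
    also have "\<dots> = d *\<^sub>R f d" using fP[OF d] by simp
    also have "\<dots> = d *\<^sub>R f c" using e by simp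
    finally have "c *\<^sub>R f c = d *\<^sub>R f c" .
    then have "(c - d) *\<^sub>R f c = 0" by (simp add: algebra_simps)
    then show "c = d" using fP[OF c] by simp
  qed
  have orth: "pairwise orthogonal (f ` S)"
    unfolding pairwise_def
  proof (intro ballI impI)
    fix x y assume x: "x \<in> f ` S" and y: "y \<in> f ` S" and ne: "x \<noteq> y"
    from x obtain c where c: "c \<in> S" "x = f c" by blast
    from y obtain d where d: "d \<in> S" "y = f d" by blast
    have cd: "c \<noteq> d" using ne c d by blast
    have "c * (f c \<bullet> f d) = (A *v f c) \<bullet> f d" using fP[OF c(1)] by simp
    also have "\<dots> = f c \<bullet> (transpose A *v f d)" by (rule dot_adj)
    also have "\<dots> = d * (f c \<bullet> f d)" using fP[OF d(1)] sym by simp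
    finally have "(c - d) * (f c \<bullet> f d) = 0" by (simp add: algebra_simps)
    then show "orthogonal x y" using cd c d by (simp add: orthogonal_def)
  qed
  have "0 \<notin> f ` S" using fP by auto
  then have "independent (f ` S)" using orth by (intro pairwise_orthogonal_independent)
  then have "finite (f ` S)" using independent_bound by blast
  then have "finite S" using inj by (rule finite_imageD)
  then show ?thesis unfolding S_def .
qed

lemma lambda_max_bound:
  fixes F :: "real^'d^'l"
  shows "(norm (F *v v))^2 \<le> lambda_max (transpose F ** F) * (norm v)^2"
    and "lambda_max (transpose F ** F) \<ge> 0"
proof -
  let ?A = "transpose F ** F"
  have cont: "continuous_on (sphere (0::real^'d) 1) (\<lambda>v. (norm (F *v v))^2)"
    by (intro continuous_intros linear_continuous_on matrix_vector_mul_linear)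
  obtain u :: "real^'d" where u: "norm u = 1"
    using vector_choose_size[of 1] by auto
  then have ne: "sphere (0::real^'d) 1 \<noteq> {}" by auto
  obtain v0 where v0: "v0 \<in> sphere 0 1" and mx: "\<forall>v\<in>sphere 0 1. (norm (F *v v))^2 \<le> (norm (F *v v0))^2"
    using continuous_attains_sup[OF compact_sphere ne cont] by blast
  define c where "c = (norm (F *v v0))^2"
  have nv0: "norm v0 = 1" using v0 by simp
  have bound: "(norm (F *v v))^2 \<le> c * (norm v)^2" for v
  proof (cases "v = 0")
    case True then show ?thesis by simp
  next
    case False
    then have "(1/norm v) *\<^sub>R v \<in> sphere 0 1" by simp
    then have "(norm (F *v ((1/norm v) *\<^sub>R v)))^2 \<le> c" using mx c_def by blast
    then have "(norm (F *v v) / norm v)^2 \<le> c"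
      by (simp add: matrix_vector_mult_scaleR power_mult_distrib)
    then have "(norm (F *v v))^2 / (norm v)^2 \<le> c" by (simp add: power_divide)
    then show ?thesis using False by (simp add: pos_divide_le_eq)
  qed
  have eig: "?A *v v0 = c *\<^sub>R v0"
  proof -
    have "(c *\<^sub>R v0 - ?A *v v0) \<bullet> w = 0" for w
    proof -
      define b where "b = c * (v0 \<bullet> w) - (F *v v0) \<bullet> (F *v w)"
      define q where "q = c * (norm w)^2 - (norm (F *v w))^2"
      have q0: "q \<ge> 0" using bound[of w] q_def by simp
      have "2 * t * b + t^2 * q \<ge> 0" for t
      proof -
        have "(norm (F *v (v0 + t *\<^sub>R w)))^2 \<le> c * (norm (v0 + t *\<^sub>R w))^2" by (rule bound)
        moreover have "(norm (F *v (v0 + t *\<^sub>R w)))^2 = c + 2 * t * ((F *v v0) \<bullet> (F *v w)) + t^2 * (norm (F *v w))^2"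
          by (simp add: matrix_vector_right_distrib matrix_vector_mult_scaleR norm_add_sq c_def)
        moreover have "(norm (v0 + t *\<^sub>R w))^2 = 1 + 2 * t * (v0 \<bullet> w) + t^2 * (norm w)^2"
          using nv0 by (simp add: norm_add_sq)
        ultimately show ?thesis unfolding b_def q_def by (simp add: algebra_simps)
      qed
      then have "b = 0" using quad_zero q0 by blast
      moreover have "(F *v v0) \<bullet> (F *v w) = (?A *v v0) \<bullet> w"
      proof -
        have "(?A *v v0) \<bullet> w = (transpose F *v (F *v v0)) \<bullet> w" by (simp only: matrix_vector_mul_assoc)
        also have "\<dots> = w \<bullet> (transpose F *v (F *v v0))" by (rule inner_commute)
        also have "\<dots> = (F *v w) \<bullet> (F *v v0)" by (rule dot_adj[symmetric])
        finally show ?thesis by (simp only: inner_commute)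
      qed
      ultimately show ?thesis unfolding b_def by (simp add: inner_diff_left)
    qed
    from this[of "c *\<^sub>R v0 - ?A *v v0"] show ?thesis by simp
  qed
  have symA: "transpose ?A = ?A" by (simp add: matrix_transpose_mul)
  have cin: "c \<in> {c. \<exists>v. v \<noteq> 0 \<and> ?A *v v = c *\<^sub>R v}" using eig nv0 by (auto intro!: exI[of _ v0])
  have "c \<le> lambda_max ?A" unfolding lambda_max_def using eig_finite[OF symA] cin by (rule Max_ge)
  moreover have "c \<ge> 0" by (simp add: c_def)
  ultimately show "lambda_max ?A \<ge> 0" by linarith
  have "c * (norm v)^2 \<le> lambda_max ?A * (norm v)^2"
    using \<open>c \<le> lambda_max ?A\<close> by (rule mult_right_mono) simp
  then show "(norm (F *v v))^2 \<le> lambda_max ?A * (norm v)^2"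
    using bound[of v] by linarith
qed



lemma proj_ineq:
  fixes S :: "'a::euclidean_space set"
  assumes "convex S" "closed S" "S \<noteq> {}" "z \<in> S"
  shows "(a - closest_point S a) \<bullet> (z - closest_point S a) \<le> 0"
  using assms by (intro any_closest_point_dot) (auto intro: closest_point_in_set closest_point_le)

lemma argmax_cp:
  fixes Y :: "(real^'l) set" and F :: "real^'d^'l"
  assumes Y: "convex Y" "closed Y" "Y \<noteq> {}" and s: "s > 0"
  shows "arg_max (\<lambda>v. Psad l F v xk - (1 / (2 * s)) * (norm (v - yk))\<^sup>2) (\<lambda>v. v \<in> Y)
       = closest_point Y (yk + s *\<^sub>R (F *v xk))"
proof -
  define a where "a = yk + s *\<^sub>R (F *v xk)"
  define K0 where "K0 = l xk + yk \<bullet> (F *v xk) + s/2 * (norm (F *v xk))^2"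
  have obj: "Psad l F v xk - (1 / (2 * s)) * (norm (v - yk))\<^sup>2 = K0 - (1 / (2 * s)) * (dist a v)\<^sup>2" for v
  proof -
    have eq: "(dist a v)^2 = (norm (v - yk))^2 - 2 * s * (v \<bullet> (F *v xk)) + 2 * s * (yk \<bullet> (F *v xk))
          + s^2 * (norm (F *v xk))^2"
      unfolding a_def dist_norm power2_norm_eq_inner
      by (simp add: inner_add_left inner_add_right inner_diff_left inner_diff_right algebra_simps
          power2_eq_square inner_commute)
    show ?thesis unfolding eq K0_def Psad_def using s
      by (simp add: field_simps power2_eq_square)
  qed
  let ?f = "\<lambda>v. Psad l F v xk - (1 / (2 * s)) * (norm (v - yk))\<^sup>2"
  have mono: "?f u \<le> ?f v \<longleftrightarrow> dist a v \<le> dist a u" for u v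
  proof -
    have "?f u \<le> ?f v \<longleftrightarrow> (dist a v)^2 \<le> (dist a u)^2" unfolding obj using s
      by (simp add: field_simps)
    also have "\<dots> \<longleftrightarrow> dist a v \<le> dist a u" by (simp add: power_mono_iff)
    finally show ?thesis .
  qed
  have "is_arg_max ?f (\<lambda>v. v \<in> Y) x \<longleftrightarrow> x = closest_point Y a" for x
  proof
    assume h: "is_arg_max ?f (\<lambda>v. v \<in> Y) x"
    then have "x \<in> Y" "\<forall>z\<in>Y. dist a x \<le> dist a z"
      unfolding is_arg_max_def using mono by (auto simp: not_less)
    then show "x = closest_point Y a" using Y by (intro closest_point_unique) auto
  next
    assume "x = closest_point Y a"
    moreover have "closest_point Y a \<in> Y" using Y by (intro closest_point_in_set) auto
    moreover have "\<forall>z\<in>Y. dist a (closest_point Y a) \<le> dist a z" using Y closest_point_le by blast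
    ultimately show "is_arg_max ?f (\<lambda>v. v \<in> Y) x"
      unfolding is_arg_max_def using mono by (auto simp: not_less)
  qed
  then have "(SOME x. is_arg_max ?f (\<lambda>v. v \<in> Y) x) = closest_point Y a" by simp
  then show ?thesis unfolding arg_max_def a_def .
qed

lemma smooth_ineq:
  fixes X :: "(real^'d) set" and l :: "real^'d \<Rightarrow> real"
  assumes X: "convex X" and x: "x \<in> X" and y: "y \<in> X"
    and l_grad: "\<And>x. x \<in> X \<Longrightarrow> (l has_derivative (\<lambda>h. gradl x \<bullet> h)) (at x within X)"
    and l_lip: "\<And>x1 x2. x1 \<in> X \<Longrightarrow> x2 \<in> X \<Longrightarrow> norm (gradl x1 - gradl x2) \<le> L * norm (x1 - x2)"
  shows "l y \<le> l x + gradl x \<bullet> (y - x) + L / 2 * (norm (y - x))^2"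
proof -
  define d where "d = y - x"
  define p where "p t = x + t *\<^sub>R d" for t :: real
  have pX: "p t \<in> X" if "0 \<le> t" "t \<le> 1" for t
  proof -
    have "p t = (1 - t) *\<^sub>R x + t *\<^sub>R y" unfolding p_def d_def by (simp add: algebra_simps)
    then show ?thesis using convexD_alt[OF X x y, of t] that by simp
  qed
  define \<phi> where "\<phi> t = l (p t) - t * (gradl x \<bullet> d) - L / 2 * t^2 * (norm d)^2" for t
  define \<phi>' where "\<phi>' t h = gradl (p t) \<bullet> (h *\<^sub>R d) - h * (gradl x \<bullet> d) - (L * t * (norm d)^2) * h" for t h
  have der: "(\<phi> has_derivative \<phi>' t) (at t within {0..1})" if "0 \<le> t" "t \<le> 1" for t
  proof -
    have pd: "(p has_derivative (\<lambda>h. h *\<^sub>R d)) (at t within {0..1})"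
      unfolding p_def by (auto intro!: derivative_eq_intros)
    have pim: "p ` {0..1} \<subseteq> X" using pX by auto
    have lp: "((\<lambda>t. l (p t)) has_derivative (\<lambda>h. gradl (p t) \<bullet> (h *\<^sub>R d))) (at t within {0..1})"
      using has_derivative_in_compose2[of X l "\<lambda>x h. gradl x \<bullet> h" p "{0..1}" t "\<lambda>h. h *\<^sub>R d"]
        l_grad pim pd that by auto
    have d2: "((\<lambda>t. t * (gradl x \<bullet> d)) has_derivative (\<lambda>h. h * (gradl x \<bullet> d))) (at t within {0..1})"
      by (auto intro!: derivative_eq_intros)
    have d3: "((\<lambda>t. L / 2 * t^2 * (norm d)^2) has_real_derivative (L * t * (norm d)^2)) (at t within {0..1})"
      by (auto intro!: derivative_eq_intros simp: power2_eq_square algebra_simps)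
    show ?thesis unfolding \<phi>_def \<phi>'_def
      using has_derivative_diff[OF has_derivative_diff[OF lp d2] d3[unfolded has_field_derivative_def]]
      by simp
  qed
  obtain t where t: "t \<in> {0..1}" and eq: "\<phi> 1 - \<phi> 0 = \<phi>' t (1 - 0)"
    using mvt_very_simple[of 0 1 \<phi> \<phi>'] der by auto
  have "\<phi>' t 1 = (gradl (p t) - gradl x) \<bullet> d - L * t * (norm d)^2"
    unfolding \<phi>'_def by (simp add: inner_diff_left)
  also have "\<dots> \<le> norm (gradl (p t) - gradl x) * norm d - L * t * (norm d)^2"
    using norm_cauchy_schwarz by simp
  also have "\<dots> \<le> L * norm (p t - x) * norm d - L * t * (norm d)^2"
    using l_lip[OF pX x] t by (auto intro: mult_right_mono)
  also have "\<dots> = 0" using t unfolding p_def by (simp add: power2_eq_square)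
  finally have "\<phi> 1 \<le> \<phi> 0" using eq by simp
  then show ?thesis unfolding \<phi>_def p_def d_def by (simp add: algebra_simps)
qed



lemma norm_sum_sq: fixes u v :: "'a::real_inner"
  shows "(norm (u + v))^2 = (norm u)^2 + 2 * (u \<bullet> v) + (norm v)^2"
  unfolding power2_norm_eq_inner
  by (simp add: inner_add_left inner_add_right algebra_simps inner_commute)

lemma polar3: fixes p q r :: "'a::real_inner"
  shows "(p - q) \<bullet> (r - q) = ((norm (p - q))^2 + (norm (r - q))^2 - (norm (r - p))^2) / 2"
proof -
  have e1: "r - p = (r - q) + (-(p - q))" by simp
  have e2: "(r - q) \<bullet> (-(p - q)) = - ((p - q) \<bullet> (r - q))"
    by (simp only: inner_minus_right inner_commute[of "r - q" "p - q"])
  have e3: "norm (-(p - q)) = norm (p - q)" by (rule norm_minus_cancel)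
  have "(norm (r - p))^2 = (norm (r - q))^2 + 2 * ((r - q) \<bullet> (-(p - q))) + (norm (-(p - q)))^2"
    unfolding e1 by (rule norm_sum_sq)
  then show ?thesis unfolding e2 e3 by simp
qed

lemma step_ineq:
  fixes X :: "(real^'d) set" and Y :: "(real^'l) set" and F :: "real^'d^'l"
    and l :: "real^'d \<Rightarrow> real" and gradl :: "real^'d \<Rightarrow> real^'d"
  assumes X: "convex X" "closed X" "X \<noteq> {}"
    and Y: "convex Y" "closed Y" "bounded Y" "Y \<noteq> {}"
    and l_grad: "\<And>x. x \<in> X \<Longrightarrow> (l has_derivative (\<lambda>h. gradl x \<bullet> h)) (at x within X)"
    and l_lip: "\<And>x1 x2. x1 \<in> X \<Longrightarrow> x2 \<in> X \<Longrightarrow> norm (gradl x1 - gradl x2) \<le> L * norm (x1 - x2)"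
    and mu_pos: "\<mu> > 0"
    and l_strong: "\<And>x y. x \<in> X \<Longrightarrow> y \<in> X \<Longrightarrow>
                     l y - l x - (y - x) \<bullet> gradl x \<ge> \<mu> / 2 * (norm (y - x))\<^sup>2"
    and s_pos: "s > 0"
    and xk: "xk \<in> X" and yk: "yk \<in> Y" and xs: "xs \<in> X" and ys: "ys \<in> Y"
    and pos: "\<mu> * (real k + 2) + 2 * L > 0"
    and beta: "beta = 2 / (\<mu> * (real k + 2) + 2 * L)"
    and y'def: "y' = closest_point Y (yk + s *\<^sub>R (F *v xk))"
    and x'def: "x' = closest_point X (xk - beta *\<^sub>R (gk + transpose F *v y'))"
  shows "Psad l F y' xs - Psad l F ys x' \<ge>
     (\<mu> * (real k + 2) + 2 * L) / 4 * (norm (xs - x'))\<^sup>2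
       + 1 / (2 * s) * (norm (ys - y'))\<^sup>2
       - (\<mu> * real k + 2 * L) / 4 * (norm (xs - xk))\<^sup>2
       - 1 / (2 * s) * (norm (ys - yk))\<^sup>2
       - (gk - gradl xk) \<bullet> (xs - xk)
       - (2 * lambda_max (transpose F ** F) * (diameter Y)\<^sup>2 + 2 * (norm (gk - gradl xk))\<^sup>2) / (\<mu> * (real k + 1))"
proof -
  define c where "c = (\<mu> * (real k + 2) + 2 * L) / 4"
  define G where "G = gk + transpose F *v y'"
  define d where "d = x' - xk"
  define \<delta> where "\<delta> = gk - gradl xk"
  define lam where "lam = lambda_max (transpose F ** F)"
  define D where "D = diameter Y"
  have x'X: "x' \<in> X" unfolding x'def using X by (intro closest_point_in_set) auto
  have y'Y: "y' \<in> Y" unfolding y'def using Y by (intro closest_point_in_set) auto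
  have cpos: "c > 0" using pos unfolding c_def by simp
  have cb: "c * beta = 1/2" unfolding c_def beta using pos by (simp add: field_simps)
  have bpos: "beta > 0" unfolding beta using pos by simp
  have P1: "(xk - beta *\<^sub>R G - x') \<bullet> (xs - x') \<le> 0"
    using proj_ineq[OF X xs, of "xk - beta *\<^sub>R G"] unfolding x'def G_def by simp
  then have "(xk - x') \<bullet> (xs - x') \<le> beta * (G \<bullet> (xs - x'))"
    by (simp add: inner_diff_left algebra_simps)
  moreover have "(xk - x') \<bullet> (xs - x') = ((norm d)^2 + (norm (xs - x'))^2 - (norm (xs - xk))^2) / 2"
    unfolding polar3 d_def by (simp add: norm_minus_commute)
  ultimately have "c * (((norm d)^2 + (norm (xs - x'))^2 - (norm (xs - xk))^2) / 2) \<le> c * (beta * (G \<bullet> (xs - x')))"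
    using cpos by (intro mult_left_mono) auto
  moreover have "c * (beta * (G \<bullet> (xs - x'))) = (G \<bullet> (xs - x')) / 2"
    by (simp only: mult.assoc[symmetric] cb)
  moreover have "c * (((norm d)^2 + (norm (xs - x'))^2 - (norm (xs - xk))^2) / 2)
     = (c * (norm d)^2 + c * (norm (xs - x'))^2 - c * (norm (xs - xk))^2) / 2"
    by (simp add: algebra_simps)
  ultimately have "(c * (norm d)^2 + c * (norm (xs - x'))^2 - c * (norm (xs - xk))^2) / 2 \<le> (G \<bullet> (xs - x')) / 2"
    by metis
  then have G1: "c * (norm d)^2 + c * (norm (xs - x'))^2 - c * (norm (xs - xk))^2 \<le> G \<bullet> (xs - x')"
    by (simp only: divide_le_cancel)
  have adj: "(transpose F *v y') \<bullet> z = y' \<bullet> (F *v z)" for z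
    using dot_adj[of "transpose F" y' z] by simp
  have F1: "gk \<bullet> (xs - x') + y' \<bullet> (F *v xs) - y' \<bullet> (F *v x') \<ge>
      c * (norm d)^2 + c * (norm (xs - x'))^2 - c * (norm (xs - xk))^2"
    using G1 adj[of "xs - x'"] unfolding G_def
    by (simp add: inner_add_left matrix_vector_mult_diff_distrib inner_diff_right)
  have P2: "((yk + s *\<^sub>R (F *v xk)) - y') \<bullet> (ys - y') \<le> 0"
    using proj_ineq[OF Y(1,2,4) ys] unfolding y'def by simp
  then have "(yk - y') \<bullet> (ys - y') + s * ((F *v xk) \<bullet> (ys - y')) \<le> 0"
    by (simp add: inner_diff_left inner_add_left algebra_simps)
  moreover have "(yk - y') \<bullet> (ys - y') = ((norm (yk - y'))^2 + (norm (ys - y'))^2 - (norm (ys - yk))^2) / 2"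
    by (rule polar3)
  moreover have "s * ((F *v xk) \<bullet> (y' - ys)) = - (s * ((F *v xk) \<bullet> (ys - y')))"
    by (simp add: inner_diff_right algebra_simps)
  moreover have "(norm (yk - y'))^2 \<ge> 0" by simp
  ultimately have "s * ((F *v xk) \<bullet> (y' - ys)) \<ge> ((norm (ys - y'))^2 - (norm (ys - yk))^2) / 2"
    by argo
  then have "(F *v xk) \<bullet> (y' - ys) \<ge> ((norm (ys - y'))^2 - (norm (ys - yk))^2) / (2 * s)"
    using s_pos by (simp add: field_simps)
  then have F2: "(F *v xk) \<bullet> y' - (F *v xk) \<bullet> ys \<ge> 1 / (2 * s) * (norm (ys - y'))^2 - 1 / (2 * s) * (norm (ys - yk))^2"
    by (simp add: inner_diff_right diff_divide_distrib)
  have F3: "l xs - l xk - gradl xk \<bullet> (xs - xk) \<ge> \<mu> / 2 * (norm (xs - xk))^2"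
    using l_strong[OF xk xs] by (simp add: inner_commute)
  have F4: "l x' \<le> l xk + gradl xk \<bullet> (x' - xk) + L / 2 * (norm d)^2"
    using smooth_ineq[OF X(1) xk x'X l_grad l_lip] unfolding d_def by simp
  have F5: "y' \<bullet> (F *v x') - ys \<bullet> (F *v x') = (F *v xk) \<bullet> y' - (F *v xk) \<bullet> ys + (y' - ys) \<bullet> (F *v d)"
    unfolding d_def by (simp add: matrix_vector_mult_diff_distrib inner_diff_left inner_diff_right inner_commute)
  have lam0: "lam \<ge> 0" unfolding lam_def by (rule lambda_max_bound(2))
  have Fd: "norm (F *v d) \<le> sqrt lam * norm d"
  proof -
    have "(norm (F *v d))^2 \<le> lam * (norm d)^2" unfolding lam_def by (rule lambda_max_bound(1))
    then have "sqrt ((norm (F *v d))^2) \<le> sqrt (lam * (norm d)^2)" by (rule real_sqrt_le_mono)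
    then show ?thesis by (simp add: real_sqrt_mult)
  qed
  have wD: "norm (y' - ys) \<le> D" unfolding D_def using diameter_bounded_bound[OF Y(3) y'Y ys] by (simp add: dist_norm)
  have D0: "0 \<le> D" using norm_ge_zero wD by (rule order.trans)
  have F6: "(y' - ys) \<bullet> (F *v d) \<ge> - (sqrt lam * D) * norm d"
  proof -
    have "-((y' - ys) \<bullet> (F *v d)) \<le> norm (y' - ys) * norm (F *v d)"
      using norm_cauchy_schwarz[of "-(y' - ys)" "F *v d"] by (simp only: inner_minus_left norm_minus_cancel)
    also have "\<dots> \<le> D * (sqrt lam * norm d)" using wD Fd D0 by (intro mult_mono) auto
    finally show ?thesis by (simp add: algebra_simps)
  qed
  have F7: "gradl xk \<bullet> (xs - xk) - gradl xk \<bullet> (x' - xk) = gk \<bullet> (xs - x') - \<delta> \<bullet> (xs - xk) + \<delta> \<bullet> d"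
    unfolding \<delta>_def d_def by (simp add: inner_diff_left inner_diff_right)
  have F8: "\<delta> \<bullet> d \<ge> - norm \<delta> * norm d"
    using norm_cauchy_schwarz[of "-\<delta>" d] unfolding inner_minus_left norm_minus_cancel by argo
  have F9: "c * (norm d)^2 - L / 2 * (norm d)^2 - (sqrt lam * D) * norm d - norm \<delta> * norm d
        \<ge> - (2 * lam * D^2 + 2 * (norm \<delta>)^2) / (\<mu> * (real k + 1))"
  proof -
    define t where "t = norm d"
    define b where "b = sqrt lam * D"
    define m where "m = norm \<delta>"
    define mu' where "mu' = \<mu> * (real k + 2)"
    have mu'pos: "mu' > 0" unfolding mu'_def using mu_pos by simp
    have ceq: "c - L / 2 = mu' / 4" unfolding c_def mu'_def by (simp add: field_simps)
    have "mu' * (c * t^2 - L / 2 * t^2 - b * t - m * t) = mu' * ((c - L / 2) * t^2 - (b + m) * t)"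
      by (simp add: algebra_simps)
    also have "\<dots> = mu' * (mu' / 4 * t^2 - (b + m) * t)" by (simp only: ceq)
    finally have "mu' * (c * t^2 - L / 2 * t^2 - b * t - m * t) + (b + m)^2 = (mu' / 2 * t - (b + m))^2"
      by (simp add: field_simps power2_eq_square)
    moreover have "(2 * b^2 + 2 * m^2) = (b + m)^2 + (b - m)^2" by (simp add: algebra_simps power2_eq_square)
    moreover have "(b - m)^2 \<ge> 0" "(mu' / 2 * t - (b + m))^2 \<ge> 0" by simp_all
    ultimately have "mu' * (c * t^2 - L / 2 * t^2 - b * t - m * t) + (2 * b^2 + 2 * m^2) \<ge> 0"
      by argo
    then have "mu' * (c * t^2 - L / 2 * t^2 - b * t - m * t) \<ge> - (2 * b^2 + 2 * m^2)" by argo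
    then have h: "c * t^2 - L / 2 * t^2 - b * t - m * t \<ge> - (2 * b^2 + 2 * m^2) / mu'"
      using mu'pos by (simp add: divide_le_eq mult.commute)
    have b2: "b^2 = lam * D^2" unfolding b_def using lam0 by (simp add: power_mult_distrib)
    have "(2 * b^2 + 2 * m^2) / mu' \<le> (2 * b^2 + 2 * m^2) / (\<mu> * (real k + 1))"
      unfolding mu'_def using mu_pos by (intro divide_left_mono) auto
    with h have "c * t^2 - L / 2 * t^2 - b * t - m * t \<ge> - (2 * b^2 + 2 * m^2) / (\<mu> * (real k + 1))"
      by argo
    then show ?thesis unfolding b2 unfolding t_def b_def m_def by (simp only: mult.assoc)
  qed
  have F10: "c * (norm (xs - xk))^2 - \<mu> / 2 * (norm (xs - xk))^2 = (\<mu> * real k + 2 * L) / 4 * (norm (xs - xk))^2"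
    unfolding c_def by (simp add: algebra_simps)
  show ?thesis
    unfolding Psad_def
    using F1 F2 F3 F4 F5 F6 F7 F8 F9 F10
    unfolding c_def[symmetric] lam_def[symmetric] D_def[symmetric] \<delta>_def[symmetric]
    by argo
qed

lemma step_ineq_sing:
  fixes X :: "(real^'d) set" and Y :: "(real^'l) set" and F :: "real^'d^'l"
    and l :: "real^'d \<Rightarrow> real" and gradl :: "real^'d \<Rightarrow> real^'d"
  assumes Y: "convex Y" "closed Y" "Y \<noteq> {}"
    and mu_pos: "\<mu> > 0"
    and s_pos: "s > 0"
    and xk: "xk \<in> X" and xs: "xs \<in> X" and ys: "ys \<in> Y"
    and sing: "\<forall>x\<in>X. x = xs" and x'X: "x' \<in> X"
    and y'def: "y' = closest_point Y (yk + s *\<^sub>R (F *v xk))"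
  shows "Psad l F y' xs - Psad l F ys x' \<ge>
     (\<mu> * (real k + 2) + 2 * L) / 4 * (norm (xs - x'))\<^sup>2
       + 1 / (2 * s) * (norm (ys - y'))\<^sup>2
       - (\<mu> * real k + 2 * L) / 4 * (norm (xs - xk))\<^sup>2
       - 1 / (2 * s) * (norm (ys - yk))\<^sup>2
       - (gk - gradl xk) \<bullet> (xs - xk)
       - (2 * lambda_max (transpose F ** F) * (diameter Y)\<^sup>2 + 2 * (norm (gk - gradl xk))\<^sup>2) / (\<mu> * (real k + 1))"
proof -
  have e1: "xk = xs" "x' = xs" using sing xk x'X by blast+
  have P2: "((yk + s *\<^sub>R (F *v xk)) - y') \<bullet> (ys - y') \<le> 0"
    using proj_ineq[OF Y ys] unfolding y'def by simp
  then have "(yk - y') \<bullet> (ys - y') + s * ((F *v xk) \<bullet> (ys - y')) \<le> 0"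
    by (simp add: inner_diff_left inner_add_left algebra_simps)
  moreover have "(yk - y') \<bullet> (ys - y') = ((norm (yk - y'))^2 + (norm (ys - y'))^2 - (norm (ys - yk))^2) / 2"
    by (rule polar3)
  moreover have "s * ((F *v xk) \<bullet> (y' - ys)) = - (s * ((F *v xk) \<bullet> (ys - y')))"
    by (simp add: inner_diff_right algebra_simps)
  moreover have "(norm (yk - y'))^2 \<ge> 0" by simp
  ultimately have "s * ((F *v xk) \<bullet> (y' - ys)) \<ge> ((norm (ys - y'))^2 - (norm (ys - yk))^2) / 2"
    by argo
  then have "(F *v xk) \<bullet> (y' - ys) \<ge> ((norm (ys - y'))^2 - (norm (ys - yk))^2) / (2 * s)"
    using s_pos by (simp add: field_simps)
  then have F2: "(F *v xs) \<bullet> y' - (F *v xs) \<bullet> ys \<ge> 1 / (2 * s) * (norm (ys - y'))^2 - 1 / (2 * s) * (norm (ys - yk))^2"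
    unfolding e1 by (simp add: inner_diff_right diff_divide_distrib)
  have lam0: "lambda_max (transpose F ** F) \<ge> 0" by (rule lambda_max_bound(2))
  have "0 \<le> (2 * lambda_max (transpose F ** F) * (diameter Y)\<^sup>2 + 2 * (norm (gk - gradl xk))\<^sup>2) / (\<mu> * (real k + 1))"
    using lam0 mu_pos by (intro divide_nonneg_pos) auto
  moreover have "Psad l F y' xs - Psad l F ys x' = (F *v xs) \<bullet> y' - (F *v xs) \<bullet> ys"
    unfolding Psad_def e1 by (simp add: inner_commute)
  ultimately show ?thesis using F2 unfolding e1 by simp
qed



lemma indep_nn_bound:
  fixes f :: "'z \<times> 'z \<Rightarrow> ennreal" and M :: "'w measure" and N E :: "'z measure"
    and W Xi Xi0 :: "'w \<Rightarrow> 'z"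
  assumes M: "prob_space M"
    and W: "W \<in> measurable M N" and Xi: "Xi \<in> measurable M E" and Xi0: "Xi0 \<in> measurable M E"
    and ind: "prob_space.indep_var M N W E Xi"
    and same: "distr M E Xi = distr M E Xi0"
    and f: "f \<in> borel_measurable (N \<Otimes>\<^sub>M E)"
    and bnd: "\<And>w. w \<in> space N \<Longrightarrow> (\<integral>\<^sup>+ \<omega>'. f (w, Xi0 \<omega>') \<partial>M) \<le> C"
  shows "(\<integral>\<^sup>+ \<omega>. f (W \<omega>, Xi \<omega>) \<partial>M) \<le> C"
proof -
  interpret prob_space M by (rule M)
  let ?PW = "distr M N W" and ?P0 = "distr M E Xi0"
  interpret PW: prob_space ?PW by (rule prob_space_distr[OF W])
  interpret P0: prob_space ?P0 by (rule prob_space_distr[OF Xi0])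
  have J: "?PW \<Otimes>\<^sub>M distr M E Xi = distr M (N \<Otimes>\<^sub>M E) (\<lambda>x. (W x, Xi x))"
    using ind indep_var_distribution_eq by blast
  have WXi: "(\<lambda>x. (W x, Xi x)) \<in> measurable M (N \<Otimes>\<^sub>M E)" using W Xi by (rule measurable_Pair)
  have "(\<integral>\<^sup>+ \<omega>. f (W \<omega>, Xi \<omega>) \<partial>M) = (\<integral>\<^sup>+ p. f p \<partial>distr M (N \<Otimes>\<^sub>M E) (\<lambda>x. (W x, Xi x)))"
    using WXi f by (subst nn_integral_distr) auto
  also have "\<dots> = (\<integral>\<^sup>+ p. f p \<partial>(?PW \<Otimes>\<^sub>M ?P0))" unfolding J[symmetric] same ..
  also have "\<dots> = (\<integral>\<^sup>+ w. (\<integral>\<^sup>+ e. f (w, e) \<partial>?P0) \<partial>?PW)"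
    using f by (subst P0.nn_integral_fst[symmetric]) (auto)
  also have "\<dots> \<le> (\<integral>\<^sup>+ w. C \<partial>?PW)"
  proof (rule nn_integral_mono)
    fix w assume "w \<in> space ?PW"
    then have w: "w \<in> space N" by simp
    have "(\<lambda>e. f (w, e)) \<in> borel_measurable E" using f w by measurable
    then have "(\<integral>\<^sup>+ e. f (w, e) \<partial>?P0) = (\<integral>\<^sup>+ \<omega>'. f (w, Xi0 \<omega>') \<partial>M)"
      using Xi0 by (subst nn_integral_distr) auto
    then show "(\<integral>\<^sup>+ e. f (w, e) \<partial>?P0) \<le> C" using bnd[OF w] by simp
  qed
  also have "\<dots> = C" using PW.emeasure_space_1 by simp
  finally show ?thesis .
qed

lemma indep_integral_zero:
  fixes f :: "'z \<times> 'z \<Rightarrow> real" and M :: "'w measure" and N E :: "'z measure"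
    and W Xi Xi0 :: "'w \<Rightarrow> 'z"
  assumes M: "prob_space M"
    and W: "W \<in> measurable M N" and Xi: "Xi \<in> measurable M E" and Xi0: "Xi0 \<in> measurable M E"
    and ind: "prob_space.indep_var M N W E Xi"
    and same: "distr M E Xi = distr M E Xi0"
    and f: "f \<in> borel_measurable (N \<Otimes>\<^sub>M E)"
    and int: "integrable M (\<lambda>\<omega>. f (W \<omega>, Xi \<omega>))"
    and zero: "\<And>w. w \<in> space N \<Longrightarrow> (\<integral>\<omega>'. f (w, Xi0 \<omega>') \<partial>M) = 0"
  shows "(\<integral>\<omega>. f (W \<omega>, Xi \<omega>) \<partial>M) = 0"
proof -
  interpret prob_space M by (rule M)
  let ?PW = "distr M N W" and ?P0 = "distr M E Xi0"
  interpret PW: prob_space ?PW by (rule prob_space_distr[OF W])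
  interpret P0: prob_space ?P0 by (rule prob_space_distr[OF Xi0])
  interpret PP: pair_sigma_finite ?PW ?P0 ..
  have J: "?PW \<Otimes>\<^sub>M distr M E Xi = distr M (N \<Otimes>\<^sub>M E) (\<lambda>x. (W x, Xi x))"
    using ind indep_var_distribution_eq by blast
  have WXi: "(\<lambda>x. (W x, Xi x)) \<in> measurable M (N \<Otimes>\<^sub>M E)" using W Xi by (rule measurable_Pair)
  have intP: "integrable (?PW \<Otimes>\<^sub>M ?P0) f"
    using int unfolding same[symmetric] J integrable_distr_eq[OF WXi f] .
  have "(\<integral>\<omega>. f (W \<omega>, Xi \<omega>) \<partial>M) = (\<integral>p. f p \<partial>distr M (N \<Otimes>\<^sub>M E) (\<lambda>x. (W x, Xi x)))"
    using WXi f by (subst integral_distr) auto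
  also have "\<dots> = (\<integral>p. f p \<partial>(?PW \<Otimes>\<^sub>M ?P0))" unfolding J[symmetric] same ..
  also have "\<dots> = (\<integral>w. (\<integral>e. f (w, e) \<partial>?P0) \<partial>?PW)"
    using PP.integral_fst'[OF intP] by simp
  also have "\<dots> = (\<integral>w. 0 \<partial>?PW)"
  proof (rule Bochner_Integration.integral_cong[OF refl])
    fix w assume "w \<in> space ?PW"
    then have w: "w \<in> space N" by simp
    have "(\<lambda>e. f (w, e)) \<in> borel_measurable E" using f w by measurable
    then have "(\<integral>e. f (w, e) \<partial>?P0) = (\<integral>\<omega>'. f (w, Xi0 \<omega>') \<partial>M)"
      using Xi0 by (subst integral_distr) auto
    then show "(\<integral>e. f (w, e) \<partial>?P0) = 0" using zero[OF w] by simp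
  qed
  also have "\<dots> = 0" by simp
  finally show ?thesis .
qed



lemma spdhg_Suc:
  fixes X :: "(real^'d) set" and Y :: "(real^'l) set" and F :: "real^'d^'l"
  assumes Y: "convex Y" "closed Y" "Y \<noteq> {}" and s: "s > 0"
  shows "spdhg X Y F l g s beta x0 y0 xs (Suc k) =
    (let yk = fst (spdhg X Y F l g s beta x0 y0 xs k);
         xk = snd (spdhg X Y F l g s beta x0 y0 xs k);
         y' = closest_point Y (yk + s *\<^sub>R (F *v xk))
     in (y', closest_point X (xk - beta (Suc k) *\<^sub>R (g xk (xs k) + transpose F *v y'))))"
  by (simp only: spdhg.simps Let_def argmax_cp[OF Y s])

lemma spdhg_in:
  fixes X :: "(real^'d) set" and Y :: "(real^'l) set" and F :: "real^'d^'l"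
  assumes X: "closed X" "X \<noteq> {}" and Y: "convex Y" "closed Y" "Y \<noteq> {}" and s: "s > 0"
    and x0: "x0 \<in> X" and y0: "y0 \<in> Y"
  shows "fst (spdhg X Y F l g s beta x0 y0 xs j) \<in> Y \<and> snd (spdhg X Y F l g s beta x0 y0 xs j) \<in> X"
proof (cases j)
  case 0 then show ?thesis using x0 y0 by simp
next
  case (Suc k) then show ?thesis
    using X Y by (simp add: spdhg_Suc[OF Y s] Let_def closest_point_in_set del: spdhg.simps)
qed

lemma spdhg_dep:
  assumes "\<And>n. n < j \<Longrightarrow> xs n = xs' n"
  shows "spdhg X Y F l g s beta x0 y0 xs j = spdhg X Y F l g s beta x0 y0 xs' j"
  using assms
proof (induction j)
  case 0 then show ?case by simp
next
  case (Suc j)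
  then have "spdhg X Y F l g s beta x0 y0 xs j = spdhg X Y F l g s beta x0 y0 xs' j" by simp
  moreover have "xs j = xs' j" using Suc.prems by simp
  ultimately show ?case by (simp only: spdhg.simps)
qed

lemma meas_cp:
  fixes S :: "'a::euclidean_space set"
  assumes "convex S" "closed S" "S \<noteq> {}" "f \<in> borel_measurable P"
  shows "(\<lambda>z. closest_point S (f z)) \<in> borel_measurable P"
  using borel_measurable_continuous_on[OF continuous_on_closest_point[OF assms(1-3)] assms(4)] .

lemma meas_mv:
  fixes A :: "real^'n^'m"
  assumes "f \<in> borel_measurable P"
  shows "(\<lambda>z. A *v f z) \<in> borel_measurable P"
proof -
  have "continuous_on UNIV (\<lambda>x. A *v x)"
    by (intro continuous_intros linear_continuous_on matrix_vector_mul_linear)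
  then show ?thesis using borel_measurable_continuous_on assms by blast
qed

lemma spdhg_meas:
  fixes X :: "(real^'d) set" and Y :: "(real^'l) set" and F :: "real^'d^'l"
    and g :: "real^'d \<Rightarrow> 'e \<Rightarrow> real^'d" and E :: "'e measure"
  assumes X: "convex X" "closed X" "X \<noteq> {}" and Y: "convex Y" "closed Y" "Y \<noteq> {}" and s: "s > 0"
    and g_meas: "(\<lambda>(x, e). g x e) \<in> borel_measurable (borel \<Otimes>\<^sub>M E)"
  shows "j \<le> k \<Longrightarrow> (\<lambda>z. fst (spdhg X Y F l g s beta x0 y0 z j)) \<in> borel_measurable (PiM {..<k} (\<lambda>_. E))
     \<and> (\<lambda>z. snd (spdhg X Y F l g s beta x0 y0 z j)) \<in> borel_measurable (PiM {..<k} (\<lambda>_. E))"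
proof (induction j)
  case 0 then show ?case by simp
next
  case (Suc j)
  let ?P = "PiM {..<k} (\<lambda>_. E)"
  let ?y = "\<lambda>z. fst (spdhg X Y F l g s beta x0 y0 z j)"
  let ?x = "\<lambda>z. snd (spdhg X Y F l g s beta x0 y0 z j)"
  from Suc have my: "?y \<in> borel_measurable ?P" and mx: "?x \<in> borel_measurable ?P" by auto
  have ma: "(\<lambda>z. ?y z + s *\<^sub>R (F *v ?x z)) \<in> borel_measurable ?P"
    using my meas_mv[OF mx] by measurable
  have my': "(\<lambda>z. closest_point Y (?y z + s *\<^sub>R (F *v ?x z))) \<in> borel_measurable ?P"
    by (rule meas_cp[OF Y ma])
  have jk: "j \<in> {..<k}" using Suc.prems by simp
  have pair: "(\<lambda>z. (?x z, z j)) \<in> measurable ?P (borel \<Otimes>\<^sub>M E)"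
    using mx measurable_component_singleton[OF jk] by (rule measurable_Pair)
  have mg: "(\<lambda>z. g (?x z) (z j)) \<in> borel_measurable ?P"
    using measurable_compose[OF pair g_meas] by simp
  have mb: "(\<lambda>z. ?x z - beta (Suc j) *\<^sub>R (g (?x z) (z j) + transpose F *v closest_point Y (?y z + s *\<^sub>R (F *v ?x z))))
      \<in> borel_measurable ?P"
    using mx mg meas_mv[OF my', of "transpose F"] by measurable
  have mx': "(\<lambda>z. closest_point X (?x z - beta (Suc j) *\<^sub>R (g (?x z) (z j) + transpose F *v closest_point Y (?y z + s *\<^sub>R (F *v ?x z)))))
      \<in> borel_measurable ?P"
    by (rule meas_cp[OF X mb])
  show ?case using my' mx' by (simp add: spdhg_Suc[OF Y s] Let_def del: spdhg.simps)
qed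



theorem lemma4:
  fixes X :: "(real^'d) set" and Y :: "(real^'l) set" and F :: "real^'d^'l"
    and l :: "real^'d \<Rightarrow> real" and gradl :: "real^'d \<Rightarrow> real^'d"
    and L \<mu> \<sigma> s :: real
    and M :: "'w measure" and E :: "'e measure"
    and \<xi> :: "nat \<Rightarrow> 'w \<Rightarrow> 'e" and g :: "real^'d \<Rightarrow> 'e \<Rightarrow> real^'d"
    and x0 xstar :: "real^'d" and y0 ystar :: "real^'l"
    and k :: nat
  assumes X: "convex X" "compact X" "X \<noteq> {}"
    and Y: "convex Y" "compact Y" "Y \<noteq> {}"
    and l_convex: "convex_on X l"
    and l_grad: "\<And>x. x \<in> X \<Longrightarrow> (l has_derivative (\<lambda>h. gradl x \<bullet> h)) (at x within X)"
    and l_cont_grad: "continuous_on X gradl"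
    and l_lip: "\<And>x1 x2. x1 \<in> X \<Longrightarrow> x2 \<in> X \<Longrightarrow> norm (gradl x1 - gradl x2) \<le> L * norm (x1 - x2)"
    and mu_pos: "\<mu> > 0"
    and l_strong: "\<And>x y. x \<in> X \<Longrightarrow> y \<in> X \<Longrightarrow>
                     l y - l x - (y - x) \<bullet> gradl x \<ge> \<mu> / 2 * (norm (y - x))\<^sup>2"
    and M: "prob_space M"
    and xi_rv: "\<And>n. \<xi> n \<in> measurable M E"
    and xi_indep: "prob_space.indep_vars M (\<lambda>_. E) \<xi> UNIV"
    and xi_ident: "\<And>n. distr M E (\<xi> n) = distr M E (\<xi> 0)"
    and g_meas: "(\<lambda>(x, e). g x e) \<in> borel_measurable (borel \<Otimes>\<^sub>M E)"
    and g_int: "\<And>x. x \<in> X \<Longrightarrow> integrable M (\<lambda>\<omega>. g x (\<xi> 0 \<omega>))"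
    and g_unbiased: "\<And>x. x \<in> X \<Longrightarrow> (\<integral>\<omega>. g x (\<xi> 0 \<omega>) \<partial>M) = gradl x"
    and g_var_int: "\<And>x. x \<in> X \<Longrightarrow> integrable M (\<lambda>\<omega>. (norm (g x (\<xi> 0 \<omega>) - gradl x))\<^sup>2)"
    and g_var: "\<And>x. x \<in> X \<Longrightarrow> (\<integral>\<omega>. (norm (g x (\<xi> 0 \<omega>) - gradl x))\<^sup>2 \<partial>M) \<le> \<sigma>\<^sup>2"
    and sigma_pos: "\<sigma> > 0"
    and s_pos: "s > 0"
    and x0: "x0 \<in> X" and y0: "y0 \<in> Y"
    and saddle: "xstar \<in> X" "ystar \<in> Y"
      "\<And>y x. y \<in> Y \<Longrightarrow> x \<in> X \<Longrightarrow>
         Psad l F y xstar \<le> Psad l F ystar xstar \<and> Psad l F ystar xstar \<le> Psad l F ystar x"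
  defines "beta \<equiv> (\<lambda>j::nat. 2 / (\<mu> * (real j + 1) + 2 * L))"
  defines "yit \<equiv> (\<lambda>j \<omega>. fst (spdhg X Y F l g s beta x0 y0 (\<lambda>n. \<xi> n \<omega>) j))"
    and "xit \<equiv> (\<lambda>j \<omega>. snd (spdhg X Y F l g s beta x0 y0 (\<lambda>n. \<xi> n \<omega>) j))"
  shows "0 \<ge> (\<integral>\<omega>. Psad l F (yit (Suc k) \<omega>) xstar - Psad l F ystar (xit (Suc k) \<omega>) \<partial>M)
    \<and> (\<integral>\<omega>. Psad l F (yit (Suc k) \<omega>) xstar - Psad l F ystar (xit (Suc k) \<omega>) \<partial>M)
      \<ge> (\<mu> * (real k + 2) + 2 * L) / 4 * (\<integral>\<omega>. (norm (xstar - xit (Suc k) \<omega>))\<^sup>2 \<partial>M)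
       + 1 / (2 * s) * (\<integral>\<omega>. (norm (ystar - yit (Suc k) \<omega>))\<^sup>2 \<partial>M)
       - (\<mu> * real k + 2 * L) / 4 * (\<integral>\<omega>. (norm (xstar - xit k \<omega>))\<^sup>2 \<partial>M)
       - 1 / (2 * s) * (\<integral>\<omega>. (norm (ystar - yit k \<omega>))\<^sup>2 \<partial>M)
       - (2 * lambda_max (transpose F ** F) * (diameter Y)\<^sup>2 + 2 * \<sigma>\<^sup>2) / (\<mu> * (real k + 1))"
proof -
  interpret P: prob_space M by (rule M)
  have Xc: "closed X" and Xb: "bounded X" using X(2) by (auto intro: compact_imp_closed compact_imp_bounded)
  have Yc: "closed Y" and Yb: "bounded Y" using Y(2) by (auto intro: compact_imp_closed compact_imp_bounded)
  define sp where "sp = (\<lambda>z j. spdhg X Y F l g s beta x0 y0 z j)"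
  have sp_in: "fst (sp z j) \<in> Y \<and> snd (sp z j) \<in> X" for z j
    unfolding sp_def using spdhg_in[OF Xc X(3) Y(1) Yc Y(3) s_pos x0 y0] by blast
  have yY: "yit j \<omega> \<in> Y" and xX: "xit j \<omega> \<in> X" for j \<omega>
    using sp_in unfolding yit_def xit_def sp_def by auto
  have betak: "beta (Suc k) = 2 / (\<mu> * (real k + 2) + 2 * L)"
    unfolding beta_def by (simp add: add.commute add.left_commute)
  have ysuc: "yit (Suc k) \<omega> = closest_point Y (yit k \<omega> + s *\<^sub>R (F *v xit k \<omega>))" for \<omega>
    unfolding yit_def xit_def by (simp add: spdhg_Suc[OF Y(1) Yc Y(3) s_pos] Let_def del: spdhg.simps)
  have xsuc: "xit (Suc k) \<omega> = closest_point X (xit k \<omega> - beta (Suc k) *\<^sub>R (g (xit k \<omega>) (\<xi> k \<omega>) + transpose F *v yit (Suc k) \<omega>))" for \<omega>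
    unfolding yit_def xit_def by (simp add: spdhg_Suc[OF Y(1) Yc Y(3) s_pos] Let_def del: spdhg.simps)
  define Zr where "Zr j \<omega> = (\<lambda>n\<in>{..<j}. \<xi> n \<omega>)" for j \<omega>
  have Zr_meas: "Zr j \<in> measurable M (PiM {..<j} (\<lambda>_. E))" for j
    unfolding Zr_def by (rule measurable_restrict) (rule xi_rv)
  have dep: "xit j \<omega> = snd (sp (Zr j \<omega>) j) \<and> yit j \<omega> = fst (sp (Zr j \<omega>) j)" for j \<omega>
  proof -
    have "sp (\<lambda>n. \<xi> n \<omega>) j = sp (Zr j \<omega>) j" unfolding sp_def
      by (rule spdhg_dep) (simp add: Zr_def)
    then show ?thesis unfolding xit_def yit_def sp_def by simp
  qed
  have hmeas: "(\<lambda>z. fst (sp z j)) \<in> borel_measurable (PiM {..<j} (\<lambda>_. E)) \<and>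
       (\<lambda>z. snd (sp z j)) \<in> borel_measurable (PiM {..<j} (\<lambda>_. E))" for j
    unfolding sp_def using spdhg_meas[OF X(1) Xc X(3) Y(1) Yc Y(3) s_pos g_meas order.refl] .
  have xmeas: "xit j \<in> borel_measurable M" for j
  proof -
    have "xit j = (\<lambda>\<omega>. snd (sp (Zr j \<omega>) j))" using dep by auto
    then show ?thesis using measurable_compose[OF Zr_meas hmeas[THEN conjunct2]] by simp
  qed
  have ymeas: "yit j \<in> borel_measurable M" for j
  proof -
    have "yit j = (\<lambda>\<omega>. fst (sp (Zr j \<omega>) j))" using dep by auto
    then show ?thesis using measurable_compose[OF Zr_meas hmeas[THEN conjunct1]] by simp
  qed

  define gr where "gr x = gradl (closest_point X x)" for x
  have gr_meas: "gr \<in> borel_measurable borel"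
  proof -
    have "continuous_on UNIV gr" unfolding gr_def
      by (rule continuous_on_compose2[OF l_cont_grad continuous_on_closest_point[OF X(1) Xc X(3)]])
         (use closest_point_in_set[OF Xc X(3)] in auto)
    then show ?thesis by (rule borel_measurable_continuous_onI)
  qed
  have gr_eq: "x \<in> X \<Longrightarrow> gr x = gradl x" for x unfolding gr_def by (simp add: closest_point_self)
  define \<delta> where "\<delta> \<omega> = g (xit k \<omega>) (\<xi> k \<omega>) - gradl (xit k \<omega>)" for \<omega>
  have \<delta>_alt: "\<delta> = (\<lambda>\<omega>. g (xit k \<omega>) (\<xi> k \<omega>) - gr (xit k \<omega>))"
    unfolding \<delta>_def using gr_eq xX by auto
  have gk_meas: "(\<lambda>\<omega>. g (xit k \<omega>) (\<xi> k \<omega>)) \<in> borel_measurable M"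
    using measurable_compose[OF measurable_Pair[OF xmeas xi_rv] g_meas] by simp
  have \<delta>_meas: "\<delta> \<in> borel_measurable M"
    unfolding \<delta>_alt using gk_meas measurable_compose[OF xmeas gr_meas] by measurable
  let ?P1 = "PiM {..<k} (\<lambda>_. E)" and ?P2 = "PiM {k} (\<lambda>_. E)"
  define Z2 where "Z2 \<omega> = (\<lambda>n\<in>{k}. \<xi> n \<omega>)" for \<omega>
  define Z0 where "Z0 \<omega> = (\<lambda>n\<in>{k}. \<xi> 0 \<omega>)" for \<omega>
  have ind: "P.indep_var ?P1 (Zr k) ?P2 Z2"
    using P.indep_var_restrict[OF xi_indep, of "{..<k}" "{k}"] unfolding Zr_def Z2_def by auto
  define cc where "cc e = (\<lambda>n\<in>{k}. (e::'e))" for e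
  have cc_meas: "cc \<in> measurable E ?P2" unfolding cc_def by (rule measurable_restrict) simp
  have Z2_eq: "Z2 = cc \<circ> \<xi> k" unfolding Z2_def cc_def by (auto simp: fun_eq_iff restrict_def)
  have Z0_eq: "Z0 = cc \<circ> \<xi> 0" unfolding Z0_def cc_def by (auto simp: fun_eq_iff restrict_def)
  have Z2_meas: "Z2 \<in> measurable M ?P2" unfolding Z2_eq by (rule measurable_comp[OF xi_rv cc_meas])
  have Z0_meas: "Z0 \<in> measurable M ?P2" unfolding Z0_eq by (rule measurable_comp[OF xi_rv cc_meas])
  have same: "distr M ?P2 Z2 = distr M ?P2 Z0"
  proof -
    have "distr M ?P2 (cc \<circ> \<xi> k) = distr (distr M E (\<xi> k)) ?P2 cc"
      by (rule distr_distr[OF cc_meas xi_rv, symmetric])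
    also have "\<dots> = distr (distr M E (\<xi> 0)) ?P2 cc" by (simp only: xi_ident[of k])
    also have "\<dots> = distr M ?P2 (cc \<circ> \<xi> 0)" by (rule distr_distr[OF cc_meas xi_rv])
    finally show ?thesis unfolding Z2_eq Z0_eq .
  qed
  define h where "h u = snd (sp u k)" for u
  have h_meas: "h \<in> borel_measurable ?P1" unfolding h_def using hmeas[of k] by simp
  have h_in: "h u \<in> X" for u unfolding h_def using sp_in by simp
  have hZ: "h (Zr k \<omega>) = xit k \<omega>" for \<omega> unfolding h_def using dep by simp
  have Z2k: "Z2 \<omega> k = \<xi> k \<omega>" and Z0k: "Z0 \<omega> k = \<xi> 0 \<omega>" for \<omega> unfolding Z2_def Z0_def by simp_all
  have pair_meas: "(\<lambda>p. (h (fst p), snd p k)) \<in> measurable (?P1 \<Otimes>\<^sub>M ?P2) (borel \<Otimes>\<^sub>M E)"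
    by (intro measurable_Pair measurable_compose[OF measurable_fst h_meas]
        measurable_compose[OF measurable_snd measurable_component_singleton]) simp
  have gp_meas: "(\<lambda>p. g (h (fst p)) (snd p k)) \<in> borel_measurable (?P1 \<Otimes>\<^sub>M ?P2)"
    using measurable_compose[OF pair_meas g_meas] by simp
  have hp_meas: "(\<lambda>p. h (fst p)) \<in> borel_measurable (?P1 \<Otimes>\<^sub>M ?P2)"
    by (rule measurable_compose[OF measurable_fst h_meas])
  have grp_meas: "(\<lambda>p. gr (h (fst p))) \<in> borel_measurable (?P1 \<Otimes>\<^sub>M ?P2)"
    by (rule measurable_compose[OF hp_meas gr_meas])
  define f2 where "f2 p = ennreal ((norm (g (h (fst p)) (snd p k) - gr (h (fst p))))^2)" for p
  have f2_meas: "f2 \<in> borel_measurable (?P1 \<Otimes>\<^sub>M ?P2)"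
    unfolding f2_def using gp_meas grp_meas by measurable
  have E2nn: "(\<integral>\<^sup>+\<omega>. ennreal ((norm (\<delta> \<omega>))^2) \<partial>M) \<le> ennreal (\<sigma>^2)"
  proof -
    have "(\<integral>\<^sup>+\<omega>. f2 (Zr k \<omega>, Z2 \<omega>) \<partial>M) \<le> ennreal (\<sigma>^2)"
    proof (rule indep_nn_bound[OF M Zr_meas Z2_meas Z0_meas ind same f2_meas])
      fix u assume "u \<in> space ?P1"
      have w: "h u \<in> X" by (rule h_in)
      have "(\<integral>\<^sup>+\<omega>'. f2 (u, Z0 \<omega>') \<partial>M) = (\<integral>\<^sup>+\<omega>'. ennreal ((norm (g (h u) (\<xi> 0 \<omega>') - gradl (h u)))^2) \<partial>M)"
        unfolding f2_def using Z0k gr_eq[OF w] by simp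
      also have "\<dots> = ennreal (\<integral>\<omega>'. (norm (g (h u) (\<xi> 0 \<omega>') - gradl (h u)))^2 \<partial>M)"
        by (rule nn_integral_eq_integral[OF g_var_int[OF w]]) simp
      also have "\<dots> \<le> ennreal (\<sigma>^2)" using g_var[OF w] by (rule ennreal_leI)
      finally show "(\<integral>\<^sup>+\<omega>'. f2 (u, Z0 \<omega>') \<partial>M) \<le> ennreal (\<sigma>^2)" .
    qed
    moreover have "f2 (Zr k \<omega>, Z2 \<omega>) = ennreal ((norm (\<delta> \<omega>))^2)" for \<omega>
      unfolding f2_def \<delta>_alt using hZ Z2k by simp
    ultimately show ?thesis by simp
  qed
  have T6_int: "integrable M (\<lambda>\<omega>. (norm (\<delta> \<omega>))^2)"
  proof (rule integrableI_bounded)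
    show "(\<lambda>\<omega>. (norm (\<delta> \<omega>))^2) \<in> borel_measurable M" using \<delta>_meas by measurable
    have "(\<integral>\<^sup>+\<omega>. ennreal (norm ((norm (\<delta> \<omega>))^2)) \<partial>M) = (\<integral>\<^sup>+\<omega>. ennreal ((norm (\<delta> \<omega>))^2) \<partial>M)"
      by simp
    also have "\<dots> < \<infinity>" using E2nn by (rule le_less_trans) simp
    finally show "(\<integral>\<^sup>+\<omega>. ennreal (norm ((norm (\<delta> \<omega>))^2)) \<partial>M) < \<infinity>" .
  qed
  have E2: "(\<integral>\<omega>. (norm (\<delta> \<omega>))^2 \<partial>M) \<le> \<sigma>^2"
  proof -
    have "(\<integral>\<omega>. (norm (\<delta> \<omega>))^2 \<partial>M) = enn2real (\<integral>\<^sup>+\<omega>. ennreal ((norm (\<delta> \<omega>))^2) \<partial>M)"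
      using \<delta>_meas by (intro integral_eq_nn_integral) auto
    also have "\<dots> \<le> enn2real (ennreal (\<sigma>^2))" using E2nn by (intro enn2real_mono) auto
    finally show ?thesis by simp
  qed
  define DX where "DX = diameter X"
  have DXb: "norm (xstar - x) \<le> DX" if "x \<in> X" for x
    using diameter_bounded_bound[OF Xb saddle(1) that] unfolding DX_def by (simp add: dist_norm)
  have DX0: "0 \<le> DX" using DXb[OF saddle(1)] by simp
  define T5 where "T5 \<omega> = \<delta> \<omega> \<bullet> (xstar - xit k \<omega>)" for \<omega>
  have T5_meas: "T5 \<in> borel_measurable M" unfolding T5_def using \<delta>_meas xmeas[of k] by measurable
  have T5_int: "integrable M T5"
  proof (rule Bochner_Integration.integrable_bound[OF _ T5_meas])
    show "integrable M (\<lambda>\<omega>. DX * (1 + (norm (\<delta> \<omega>))^2))"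
      using T6_int by (intro integrable_mult_right integrable_add) auto
    show "AE \<omega> in M. norm (T5 \<omega>) \<le> norm (DX * (1 + (norm (\<delta> \<omega>))^2))"
    proof (rule AE_I2)
      fix \<omega>
      have "norm (T5 \<omega>) \<le> norm (\<delta> \<omega>) * norm (xstar - xit k \<omega>)"
        unfolding T5_def real_norm_def by (rule Cauchy_Schwarz_ineq2)
      also have "\<dots> \<le> norm (\<delta> \<omega>) * DX" using DXb[OF xX] by (intro mult_left_mono) auto
      also have "\<dots> \<le> (1 + (norm (\<delta> \<omega>))^2) * DX"
      proof (intro mult_right_mono DX0)
        have "0 \<le> (norm (\<delta> \<omega>) - 1/2)^2" by simp
        then show "norm (\<delta> \<omega>) \<le> 1 + (norm (\<delta> \<omega>))^2" by (simp add: power2_eq_square algebra_simps)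
      qed
      also have "\<dots> = norm (DX * (1 + (norm (\<delta> \<omega>))^2))" using DX0 by (simp add: abs_mult)
      finally show "norm (T5 \<omega>) \<le> norm (DX * (1 + (norm (\<delta> \<omega>))^2))" .
    qed
  qed
  define f1 where "f1 p = (g (h (fst p)) (snd p k) - gr (h (fst p))) \<bullet> (xstar - h (fst p))" for p
  have f1_meas: "f1 \<in> borel_measurable (?P1 \<Otimes>\<^sub>M ?P2)"
    unfolding f1_def using gp_meas grp_meas hp_meas by measurable
  have f1Z: "(\<lambda>\<omega>. f1 (Zr k \<omega>, Z2 \<omega>)) = T5"
    unfolding f1_def T5_def \<delta>_alt using hZ Z2k by (simp add: fun_eq_iff)
  have E1: "(\<integral>\<omega>. T5 \<omega> \<partial>M) = 0"
  proof -
    have "(\<integral>\<omega>. f1 (Zr k \<omega>, Z2 \<omega>) \<partial>M) = 0"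
    proof (rule indep_integral_zero[OF M Zr_meas Z2_meas Z0_meas ind same f1_meas])
      show "integrable M (\<lambda>\<omega>. f1 (Zr k \<omega>, Z2 \<omega>))" unfolding f1Z by (rule T5_int)
      fix u assume "u \<in> space ?P1"
      have w: "h u \<in> X" by (rule h_in)
      have "(\<integral>\<omega>'. f1 (u, Z0 \<omega>') \<partial>M) = (\<integral>\<omega>'. (g (h u) (\<xi> 0 \<omega>') - gradl (h u)) \<bullet> (xstar - h u) \<partial>M)"
        unfolding f1_def using Z0k gr_eq[OF w] by simp
      also have "\<dots> = (\<integral>\<omega>'. (g (h u) (\<xi> 0 \<omega>') - gradl (h u)) \<partial>M) \<bullet> (xstar - h u)"
        using g_int[OF w] by (intro integral_inner_left) auto
      also have "(\<integral>\<omega>'. (g (h u) (\<xi> 0 \<omega>') - gradl (h u)) \<partial>M) = 0"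
        using g_int[OF w] g_unbiased[OF w] by (simp add: Bochner_Integration.integral_diff P.prob_space)
      finally show "(\<integral>\<omega>'. f1 (u, Z0 \<omega>') \<partial>M) = 0" by simp
    qed
    then show ?thesis unfolding f1Z .
  qed

  have alt: "\<mu> * (real k + 2) + 2 * L > 0 \<or> (\<forall>x\<in>X. x = xstar)"
  proof (cases "\<exists>x\<in>X. x \<noteq> xstar")
    case True
    then obtain x where x: "x \<in> X" "x \<noteq> xstar" by blast
    have "0 \<le> L * norm (x - xstar)" using norm_ge_zero l_lip[OF x(1) saddle(1)] by (rule order.trans)
    moreover have "norm (x - xstar) > 0" using x(2) by simp
    ultimately have "L \<ge> 0" by (simp add: zero_le_mult_iff)
    then show ?thesis using mu_pos by (auto intro!: add_pos_nonneg)
  next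
    case False then show ?thesis by blast
  qed
  define lam where "lam = lambda_max (transpose F ** F)"
  define K where "K = 2 * lam * (diameter Y)\<^sup>2"
  define RHS where "RHS \<omega> = (\<mu> * (real k + 2) + 2 * L) / 4 * (norm (xstar - xit (Suc k) \<omega>))\<^sup>2
       + 1 / (2 * s) * (norm (ystar - yit (Suc k) \<omega>))\<^sup>2
       - (\<mu> * real k + 2 * L) / 4 * (norm (xstar - xit k \<omega>))\<^sup>2
       - 1 / (2 * s) * (norm (ystar - yit k \<omega>))\<^sup>2
       - T5 \<omega>
       - (K + 2 * (norm (\<delta> \<omega>))\<^sup>2) / (\<mu> * (real k + 1))" for \<omega>
  define LHS where "LHS \<omega> = Psad l F (yit (Suc k) \<omega>) xstar - Psad l F ystar (xit (Suc k) \<omega>)" for \<omega>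
  have pw: "RHS \<omega> \<le> LHS \<omega>" for \<omega>
  proof -
    from alt show ?thesis
    proof
      assume pos: "\<mu> * (real k + 2) + 2 * L > 0"
      show ?thesis
        using step_ineq[OF X(1) Xc X(3) Y(1) Yc Yb Y(3) l_grad l_lip mu_pos l_strong s_pos xX yY saddle(1,2) pos
            betak ysuc xsuc]
        unfolding RHS_def LHS_def T5_def \<delta>_def K_def lam_def by simp
    next
      assume sing: "\<forall>x\<in>X. x = xstar"
      show ?thesis
        using step_ineq_sing[where k=k and L=L and gk="g (xit k \<omega>) (\<xi> k \<omega>)" and gradl=gradl and l=l,
            OF Y(1) Yc Y(3) mu_pos s_pos xX saddle(1,2) sing xX ysuc]
        unfolding RHS_def LHS_def T5_def \<delta>_def K_def lam_def by simp
    qed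
  qed

  have bint: "integrable M f" if "f \<in> borel_measurable M" "\<And>\<omega>. norm (f \<omega>) \<le> B" for f :: "'w \<Rightarrow> real" and B
    using that by (intro P.integrable_const_bound[where B=B]) auto
  define DY where "DY = diameter Y"
  have DYb: "norm (ystar - y) \<le> DY" if "y \<in> Y" for y
    using diameter_bounded_bound[OF Yb saddle(2) that] unfolding DY_def by (simp add: dist_norm)
  have sqx: "norm ((norm (xstar - x))\<^sup>2) \<le> DX^2" if "x \<in> X" for x
    using DXb[OF that] by (simp add: power_mono)
  have sqy: "norm ((norm (ystar - y))\<^sup>2) \<le> DY^2" if "y \<in> Y" for y
    using DYb[OF that] by (simp add: power_mono)
  have int1: "integrable M (\<lambda>\<omega>. (norm (xstar - xit j \<omega>))\<^sup>2)" for j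
    by (rule bint[OF _ sqx[OF xX]]) (use xmeas[of j] in measurable)
  have int2: "integrable M (\<lambda>\<omega>. (norm (ystar - yit j \<omega>))\<^sup>2)" for j
    by (rule bint[OF _ sqy[OF yY]]) (use ymeas[of j] in measurable)
  have l_cont: "continuous_on X l"
    using l_grad has_derivative_continuous continuous_on_eq_continuous_within by blast
  define lc where "lc x = l (closest_point X x)" for x
  have lc_meas: "lc \<in> borel_measurable borel"
  proof -
    have "continuous_on UNIV lc" unfolding lc_def
      by (rule continuous_on_compose2[OF l_cont continuous_on_closest_point[OF X(1) Xc X(3)]])
         (use closest_point_in_set[OF Xc X(3)] in auto)
    then show ?thesis by (rule borel_measurable_continuous_onI)
  qed
  have LHS_alt: "LHS = (\<lambda>\<omega>. l xstar + yit (Suc k) \<omega> \<bullet> (F *v xstar) - lc (xit (Suc k) \<omega>) - ystar \<bullet> (F *v xit (Suc k) \<omega>))"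
    unfolding LHS_def Psad_def lc_def using xX by (auto simp: closest_point_self fun_eq_iff)
  have LHS_meas: "LHS \<in> borel_measurable M"
    unfolding LHS_alt using ymeas[of "Suc k"] measurable_compose[OF xmeas[of "Suc k"] lc_meas]
      meas_mv[OF xmeas[of "Suc k"], of F] by measurable
  obtain Bl where Bl: "\<And>x. x \<in> X \<Longrightarrow> norm (l x) \<le> Bl"
    using compact_imp_bounded[OF compact_continuous_image[OF l_cont X(2)]] unfolding bounded_iff by auto
  obtain BF where BF: "\<And>x. x \<in> X \<Longrightarrow> norm (F *v x) \<le> BF"
  proof -
    have "continuous_on X (\<lambda>x. F *v x)" by (intro continuous_intros linear_continuous_on matrix_vector_mul_linear)
    then have "bounded ((\<lambda>x. F *v x) ` X)" by (rule compact_imp_bounded[OF compact_continuous_image[OF _ X(2)]])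
    then show ?thesis using that unfolding bounded_iff by auto
  qed
  obtain BY where BY: "\<And>y. y \<in> Y \<Longrightarrow> norm y \<le> BY" using Yb unfolding bounded_iff by auto
  have LHS_int: "integrable M LHS"
  proof (rule bint[OF LHS_meas])
    fix \<omega>
    let ?y = "yit (Suc k) \<omega>" and ?x = "xit (Suc k) \<omega>"
    have "norm (LHS \<omega>) \<le> norm (l xstar) + norm (?y \<bullet> (F *v xstar)) + norm (l ?x) + norm (ystar \<bullet> (F *v ?x))"
      unfolding LHS_def Psad_def real_norm_def
      using abs_ge_self[of "l xstar"] abs_ge_minus_self[of "l xstar"]
        abs_ge_self[of "?y \<bullet> (F *v xstar)"] abs_ge_minus_self[of "?y \<bullet> (F *v xstar)"]
        abs_ge_self[of "l ?x"] abs_ge_minus_self[of "l ?x"]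
        abs_ge_self[of "ystar \<bullet> (F *v ?x)"] abs_ge_minus_self[of "ystar \<bullet> (F *v ?x)"]
        abs_le_iff[of "l xstar + ?y \<bullet> (F *v xstar) - (l ?x + ystar \<bullet> (F *v ?x))"]
      by argo
    also have "\<dots> \<le> Bl + BY * BF + Bl + norm ystar * BF"
    proof -
      have "norm (?y \<bullet> (F *v xstar)) \<le> norm ?y * norm (F *v xstar)"
        unfolding real_norm_def by (rule Cauchy_Schwarz_ineq2)
      also have "\<dots> \<le> BY * BF"
        using BY[OF yY] BF[OF saddle(1)] order.trans[OF norm_ge_zero BY[OF yY]] by (intro mult_mono) auto
      finally have a: "norm (?y \<bullet> (F *v xstar)) \<le> BY * BF" .
      have "norm (ystar \<bullet> (F *v ?x)) \<le> norm ystar * norm (F *v ?x)"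
        unfolding real_norm_def by (rule Cauchy_Schwarz_ineq2)
      also have "\<dots> \<le> norm ystar * BF" using BF[OF xX] by (intro mult_left_mono) auto
      finally have b: "norm (ystar \<bullet> (F *v ?x)) \<le> norm ystar * BF" .
      show ?thesis using a b Bl[OF saddle(1)] Bl[OF xX[of "Suc k" \<omega>]] by argo
    qed
    finally show "norm (LHS \<omega>) \<le> Bl + BY * BF + Bl + norm ystar * BF" .
  qed
  have nonpos: "LHS \<omega> \<le> 0" for \<omega>
    using saddle(3)[OF yY[of "Suc k" \<omega>] saddle(1)] saddle(3)[OF saddle(2) xX[of "Suc k" \<omega>]] unfolding LHS_def by argo
  have C1: "(\<integral>\<omega>. LHS \<omega> \<partial>M) \<le> 0"
  proof -
    have "0 \<le> (\<integral>\<omega>. - LHS \<omega> \<partial>M)" using nonpos by (intro integral_nonneg_AE) (auto intro!: AE_I2)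
    then show ?thesis by simp
  qed
  define mk where "mk = \<mu> * (real k + 1)"
  have hK: "has_bochner_integral M (\<lambda>_. K) K"
    using has_bochner_integral_integrable[of M "\<lambda>_. K"] by (simp add: P.prob_space)
  have HB: "has_bochner_integral M RHS
     ((\<mu> * (real k + 2) + 2 * L) / 4 * (\<integral>\<omega>. (norm (xstar - xit (Suc k) \<omega>))\<^sup>2 \<partial>M)
       + 1 / (2 * s) * (\<integral>\<omega>. (norm (ystar - yit (Suc k) \<omega>))\<^sup>2 \<partial>M)
       - (\<mu> * real k + 2 * L) / 4 * (\<integral>\<omega>. (norm (xstar - xit k \<omega>))\<^sup>2 \<partial>M)
       - 1 / (2 * s) * (\<integral>\<omega>. (norm (ystar - yit k \<omega>))\<^sup>2 \<partial>M)
       - (\<integral>\<omega>. T5 \<omega> \<partial>M)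
       - (K + 2 * (\<integral>\<omega>. (norm (\<delta> \<omega>))\<^sup>2 \<partial>M)) / (\<mu> * (real k + 1)))"
    unfolding RHS_def
    by (intro has_bochner_integral_diff has_bochner_integral_add has_bochner_integral_mult_right
        has_bochner_integral_divide hK has_bochner_integral_integrable int1 int2 T5_int T6_int)
  have RHS_int: "integrable M RHS" using HB by (rule integrable.intros)
  have mono: "(\<integral>\<omega>. RHS \<omega> \<partial>M) \<le> (\<integral>\<omega>. LHS \<omega> \<partial>M)"
    by (rule integral_mono[OF RHS_int LHS_int pw])
  have mkpos: "\<mu> * (real k + 1) > 0" using mu_pos by simp
  have "(K + 2 * (\<integral>\<omega>. (norm (\<delta> \<omega>))\<^sup>2 \<partial>M)) / (\<mu> * (real k + 1)) \<le> (K + 2 * \<sigma>\<^sup>2) / (\<mu> * (real k + 1))"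
    using E2 mkpos by (intro divide_right_mono) auto
  then have C2: "(\<integral>\<omega>. LHS \<omega> \<partial>M) \<ge>
      (\<mu> * (real k + 2) + 2 * L) / 4 * (\<integral>\<omega>. (norm (xstar - xit (Suc k) \<omega>))\<^sup>2 \<partial>M)
       + 1 / (2 * s) * (\<integral>\<omega>. (norm (ystar - yit (Suc k) \<omega>))\<^sup>2 \<partial>M)
       - (\<mu> * real k + 2 * L) / 4 * (\<integral>\<omega>. (norm (xstar - xit k \<omega>))\<^sup>2 \<partial>M)
       - 1 / (2 * s) * (\<integral>\<omega>. (norm (ystar - yit k \<omega>))\<^sup>2 \<partial>M)
       - (K + 2 * \<sigma>\<^sup>2) / (\<mu> * (real k + 1))"
    using mono has_bochner_integral_integral_eq[OF HB] E1 by argo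
  show ?thesis using C1 C2 unfolding LHS_def K_def lam_def by simp
qed

end
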